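(* Let $N\ge0$, let $H_0\in\mathbb{R}$ and $H_n:\mathbb{Z}^n\to\mathbb{R}$ ($1\le n\le N$) be finitely supported kernels, and let $f(x)=\sum_{n=0}^{N}H_n*x^n$. For finitely supported signals $x,\epsilon:\mathbb{Z}\to\mathbb{R}$, $$\|f(x+\epsilon)-f(x)\|_2\le\min\left(\sum_{n=0}^{N}\|H_n\|_2\sum_{k=0}^{n-1}\Big(\frac{en}{k}\Big)^k\|x\|_1^k\|\epsilon\|_1^{n-k},\ \sum_{n=0}^{N}\|H_n\|_1\sum_{k=0}^{n-1}\Big(\frac{en}{k}\Big)^k\|x\|_{2k}^k\|\epsilon\|_{2(n-k)}^{n-k}\right),$$ where $e$ is the base of the natural logarithm.
   Context: Signals are real functions on $\mathbb{Z}$. For a kernel $H:\mathbb{Z}^n\to\mathbb{R}$ ($n\ge1$) and signals $x_1,\dots,x_n$, the order-$n$ convolution is $(H*[x_1,\dots,x_n])(t)=\sum_{(\tau_1,\dots,\tau_n)\in\mathbb{Z}^n}H(\tau_1,\dots,\tau_n)\prod_{i=1}^n x_i(t-\tau_i)$, and $H*x^n$ denotes $H*[x,\dots,x]$ ($n$ copies); for $n=0$, $H_0*x^0$ is the constant signal $H_0$. For a function $A$ on $\mathbb{Z}^d$, $\|A\|_p=(\sum_{\tau}|A(\tau)|^p)^{1/p}$. Empty sums are $0$; in the $k=0$ terms, $(en/k)^k$ and $\|x\|_{2k}^k$ are interpreted as $1$. *)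

theory Defs
  imports "HOL-Analysis.Analysis"
begin

text \<open>Signals are functions int => real. A kernel of order n is a function on Z^n,
represented as a function on int lists, only its values on lists of length n matter.\<close>

type_synonym signal = "int \<Rightarrow> real"
type_synonym kernel = "int list \<Rightarrow> real"

definition tuples :: "nat \<Rightarrow> int list set" where
  "tuples n = {\<tau>. length \<tau> = n}"

definition conv :: "kernel \<Rightarrow> signal list \<Rightarrow> signal" where
  "conv H xs t = (\<Sum>\<^sub>\<infinity>\<tau>\<in>tuples (length xs). H \<tau> * (\<Prod>i<length xs. (xs ! i) (t - \<tau> ! i)))"

definition conv_pow :: "kernel \<Rightarrow> nat \<Rightarrow> signal \<Rightarrow> signal" where
  "conv_pow H n x = conv H (replicate n x)"

definition lp_norm :: "real \<Rightarrow> ('a \<Rightarrow> real) \<Rightarrow> 'a set \<Rightarrow> real" where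
  "lp_norm p A S = (\<Sum>\<^sub>\<infinity>\<tau>\<in>S. \<bar>A \<tau>\<bar> powr p) powr (1 / p)"

abbreviation sig_norm :: "real \<Rightarrow> signal \<Rightarrow> real" where
  "sig_norm p x \<equiv> lp_norm p x UNIV"

abbreviation ker_norm :: "real \<Rightarrow> nat \<Rightarrow> kernel \<Rightarrow> real" where
  "ker_norm p n H \<equiv> lp_norm p H (tuples n)"

text \<open>Polynomial (Volterra) operator f(x) = sum_{n=0}^N H_n * x^n;
 H 0 is the kernel on Z^0 = {[]}, whose value H 0 [] is the constant H_0.\<close>
definition volterra :: "nat \<Rightarrow> (nat \<Rightarrow> kernel) \<Rightarrow> signal \<Rightarrow> signal" where
  "volterra N H x t = (\<Sum>n\<le>N. conv_pow (H n) n x t)"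

end

theory Submission
  imports Defs
begin

definition supp :: "('a \<Rightarrow> real) \<Rightarrow> 'a set" where "supp f = {t. f t \<noteq> 0}"

lemma lp_fin:
  assumes "finite T" "T \<subseteq> S" "\<And>t. t \<in> S \<Longrightarrow> t \<notin> T \<Longrightarrow> f t = 0"
  shows "lp_norm p f S = (\<Sum>t\<in>T. \<bar>f t\<bar> powr p) powr (1/p)"
proof -
  have "infsum (\<lambda>t. \<bar>f t\<bar> powr p) S = infsum (\<lambda>t. \<bar>f t\<bar> powr p) T"
    by (rule infsum_cong_neutral) (use assms in auto)
  then show ?thesis unfolding lp_norm_def using assms(1) by simp
qed

lemma abs_powr_nat: "0 < n \<Longrightarrow> \<bar>a::real\<bar> powr real n = \<bar>a\<bar> ^ n"
  by (cases "a = 0") (auto simp: powr_realpow)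

lemma lp_nonneg: "lp_norm p f S \<ge> 0"
  unfolding lp_norm_def by simp

lemma lp2_fin:
  assumes "finite T" "T \<subseteq> S" "\<And>t. t \<in> S \<Longrightarrow> t \<notin> T \<Longrightarrow> f t = 0"
  shows "lp_norm 2 f S = sqrt (\<Sum>t\<in>T. (f t)^2)"
proof -
  have "lp_norm 2 f S = (\<Sum>t\<in>T. \<bar>f t\<bar> powr 2) powr (1/2)" by (rule lp_fin[OF assms])
  also have "\<dots> = (\<Sum>t\<in>T. (f t)^2) powr (1/2)"
    using abs_powr_nat[of 2] by simp
  also have "\<dots> = sqrt (\<Sum>t\<in>T. (f t)^2)" by (simp add: powr_half_sqrt sum_nonneg)
  finally show ?thesis .
qed

lemma lp1_fin:
  assumes "finite T" "T \<subseteq> S" "\<And>t. t \<in> S \<Longrightarrow> t \<notin> T \<Longrightarrow> f t = 0"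
  shows "lp_norm 1 f S = (\<Sum>t\<in>T. \<bar>f t\<bar>)"
proof -
  have "lp_norm 1 f S = (\<Sum>t\<in>T. \<bar>f t\<bar> powr 1) powr (1/1)" by (rule lp_fin[OF assms])
  also have "\<dots> = (\<Sum>t\<in>T. \<bar>f t\<bar>)" by (simp add: sum_nonneg)
  finally show ?thesis .
qed

lemma sig2_fin: "finite T \<Longrightarrow> supp f \<subseteq> T \<Longrightarrow> sig_norm 2 f = sqrt (\<Sum>t\<in>T. (f t)^2)"
  by (rule lp2_fin) (auto simp: supp_def)

lemma supp_sum: "supp (\<lambda>t. \<Sum>i\<in>I. F i t) \<subseteq> (\<Union>i\<in>I. supp (F i))"
  unfolding supp_def by (auto intro: ccontr simp: sum.neutral)

lemma sig2_add:
  assumes "finite (supp f)" "finite (supp g)"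
  shows "sig_norm 2 (\<lambda>t. f t + g t) \<le> sig_norm 2 f + sig_norm 2 g"
proof -
  let ?T = "supp f \<union> supp g"
  have "sig_norm 2 (\<lambda>t. f t + g t) = L2_set (\<lambda>t. f t + g t) ?T"
    unfolding L2_set_def by (rule sig2_fin) (use assms in \<open>auto simp: supp_def\<close>)
  also have "\<dots> \<le> L2_set f ?T + L2_set g ?T" by (rule L2_set_triangle_ineq)
  also have "L2_set f ?T = sig_norm 2 f" unfolding L2_set_def
    by (rule sig2_fin[symmetric]) (use assms in auto)
  also have "L2_set g ?T = sig_norm 2 g" unfolding L2_set_def
    by (rule sig2_fin[symmetric]) (use assms in auto)
  finally show ?thesis .
qed

lemma sig2_sum:
  assumes "finite I" "\<And>i. i \<in> I \<Longrightarrow> finite (supp (F i))"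
  shows "sig_norm 2 (\<lambda>t. \<Sum>i\<in>I. F i t) \<le> (\<Sum>i\<in>I. sig_norm 2 (F i))"
  using assms
proof (induction I rule: finite_induct)
  case empty
  have "sig_norm 2 (\<lambda>t. 0::real) = 0" by (subst sig2_fin[of "{}"]) (auto simp: supp_def)
  then show ?case by simp
next
  case (insert a I)
  have fI: "finite (supp (\<lambda>t. \<Sum>i\<in>I. F i t))"
    by (rule finite_subset[OF supp_sum]) (use insert in auto)
  have "sig_norm 2 (\<lambda>t. \<Sum>i\<in>insert a I. F i t) = sig_norm 2 (\<lambda>t. F a t + (\<Sum>i\<in>I. F i t))"
    using insert by simp
  also have "\<dots> \<le> sig_norm 2 (F a) + sig_norm 2 (\<lambda>t. \<Sum>i\<in>I. F i t)"
    by (rule sig2_add) (use insert fI in auto)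
  also have "\<dots> \<le> sig_norm 2 (F a) + (\<Sum>i\<in>I. sig_norm 2 (F i))"
    using insert by simp
  finally show ?case using insert by simp
qed

lemma sig2_scale:
  assumes "finite (supp f)"
  shows "sig_norm 2 (\<lambda>t. c * f t) = \<bar>c\<bar> * sig_norm 2 f"
proof -
  have "sig_norm 2 (\<lambda>t. c * f t) = sqrt (\<Sum>t\<in>supp f. (c * f t)^2)"
    by (rule sig2_fin) (use assms in \<open>auto simp: supp_def\<close>)
  also have "\<dots> = \<bar>c\<bar> * sqrt (\<Sum>t\<in>supp f. (f t)^2)"
    by (simp add: power_mult_distrib sum_distrib_left[symmetric] real_sqrt_mult)
  also have "sqrt (\<Sum>t\<in>supp f. (f t)^2) = sig_norm 2 f"
    by (rule sig2_fin[symmetric]) (use assms in auto)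
  finally show ?thesis .
qed

lemma sig2_mult:
  assumes "finite (supp f)" "finite (supp g)"
  shows "sig_norm 2 (\<lambda>t. f t * g t) \<le> sig_norm 2 f * sig_norm 2 g"
proof -
  let ?T = "supp f \<union> supp g"
  have e1: "sig_norm 2 (\<lambda>t. f t * g t) = sqrt (\<Sum>t\<in>?T. (f t * g t)^2)"
    by (rule sig2_fin) (use assms in \<open>auto simp: supp_def\<close>)
  have e2: "sig_norm 2 f = sqrt (\<Sum>t\<in>?T. (f t)^2)" by (rule sig2_fin) (use assms in auto)
  have e3: "sig_norm 2 g = sqrt (\<Sum>t\<in>?T. (g t)^2)" by (rule sig2_fin) (use assms in auto)
  have "(\<Sum>t\<in>?T. (f t * g t)^2) \<le> (\<Sum>t\<in>?T. (f t)^2 * (\<Sum>s\<in>?T. (g s)^2))"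
  proof (rule sum_mono)
    fix t assume t: "t \<in> ?T"
    have "(g t)^2 \<le> (\<Sum>s\<in>?T. (g s)^2)"
      by (rule member_le_sum) (use t assms in auto)
    then show "(f t * g t)^2 \<le> (f t)^2 * (\<Sum>s\<in>?T. (g s)^2)"
      by (simp add: power_mult_distrib mult_left_mono)
  qed
  also have "\<dots> = (\<Sum>t\<in>?T. (f t)^2) * (\<Sum>s\<in>?T. (g s)^2)"
    by (simp add: sum_distrib_right)
  finally show ?thesis unfolding e1 e2 e3 real_sqrt_mult[symmetric] by (rule real_sqrt_le_mono)
qed

lemma sum_inj_le:
  fixes F :: "'a \<Rightarrow> real"
  assumes "inj_on h T" "finite T" "finite U" "\<And>u. F u \<ge> 0" "\<And>u. u \<notin> U \<Longrightarrow> F u = 0"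
  shows "(\<Sum>t\<in>T. F (h t)) \<le> (\<Sum>u\<in>U. F u)"
proof -
  have "(\<Sum>t\<in>T. F (h t)) = (\<Sum>u\<in>h ` T. F u)" using assms by (simp add: sum.reindex)
  also have "\<dots> = (\<Sum>u\<in>h ` T \<inter> U. F u)"
    by (rule sum.mono_neutral_right) (use assms in auto)
  also have "\<dots> \<le> (\<Sum>u\<in>U. F u)"
    by (rule sum_mono2) (use assms in auto)
  finally show ?thesis .
qed


lemma conv_fin:
  assumes "finite SH" "SH \<subseteq> tuples n" "\<And>\<tau>. \<tau> \<in> tuples n \<Longrightarrow> \<tau> \<notin> SH \<Longrightarrow> H \<tau> = 0"
    and "length xs = n"
  shows "conv H xs t = (\<Sum>\<tau>\<in>SH. H \<tau> * (\<Prod>i<n. (xs ! i) (t - \<tau> ! i)))"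
proof -
  have "conv H xs t = infsum (\<lambda>\<tau>. H \<tau> * (\<Prod>i<n. (xs ! i) (t - \<tau> ! i))) (tuples n)"
    unfolding conv_def using assms(4) by simp
  also have "\<dots> = infsum (\<lambda>\<tau>. H \<tau> * (\<Prod>i<n. (xs ! i) (t - \<tau> ! i))) SH"
    by (rule infsum_cong_neutral) (use assms in auto)
  finally show ?thesis using assms(1) by simp
qed

lemma supp_shift: "finite (supp y) \<Longrightarrow> finite (supp (\<lambda>t::int. y (t - c)))"
proof -
  assume "finite (supp y)"
  moreover have "supp (\<lambda>t. y (t - c)) = (\<lambda>t. t - c) -` supp y" by (auto simp: supp_def)
  ultimately show ?thesis by (auto intro: finite_vimageI simp: inj_on_def)
qed

lemma supp_prod:
  assumes "finite I" "j \<in> I" "finite (supp (F j))"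
  shows "finite (supp (\<lambda>t. \<Prod>i\<in>I. F i t))"
proof (rule finite_subset[OF _ assms(3)])
  show "supp (\<lambda>t. \<Prod>i\<in>I. F i t) \<subseteq> supp (F j)"
    using assms by (auto simp: supp_def)
qed

lemma supp_mult: "finite (supp g) \<Longrightarrow> finite (supp (\<lambda>t. f t * g t))"
  by (rule finite_subset[of _ "supp g"]) (auto simp: supp_def)

lemma supp_sumI: "finite I \<Longrightarrow> (\<And>i. i \<in> I \<Longrightarrow> finite (supp (F i))) \<Longrightarrow> finite (supp (\<lambda>t. \<Sum>i\<in>I. F i t))"
  by (rule finite_subset[OF supp_sum]) auto

lemma lists_sum_prod:
  fixes f :: "nat \<Rightarrow> 'a \<Rightarrow> real"
  assumes "finite A"
  shows "(\<Sum>l\<in>{l. set l \<subseteq> A \<and> length l = n}. \<Prod>i<n. f i (l ! i)) = (\<Prod>i<n. \<Sum>a\<in>A. f i a)"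
  using assms
proof (induction n arbitrary: f)
  case 0
  have "{l. set l \<subseteq> A \<and> length l = 0} = {[]}" by auto
  then show ?case by simp
next
  case (Suc n)
  let ?L = "\<lambda>n. {l. set l \<subseteq> A \<and> length l = n}"
  have eq: "?L (Suc n) = (\<lambda>(a, l). a # l) ` (A \<times> ?L n)"
  proof
    show "?L (Suc n) \<subseteq> (\<lambda>(a, l). a # l) ` (A \<times> ?L n)"
    proof
      fix l assume "l \<in> ?L (Suc n)"
      then obtain a l' where "l = a # l'" "a \<in> A" "l' \<in> ?L n" by (cases l) auto
      then show "l \<in> (\<lambda>(a, l). a # l) ` (A \<times> ?L n)" by force
    qed
  qed auto
  have inj: "inj_on (\<lambda>(a, l). a # l) (A \<times> ?L n)" by (auto simp: inj_on_def)
  have "(\<Sum>l\<in>?L (Suc n). \<Prod>i<Suc n. f i (l ! i))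
      = (\<Sum>(a, l)\<in>A \<times> ?L n. \<Prod>i<Suc n. f i ((a # l) ! i))"
    unfolding eq by (subst sum.reindex[OF inj]) (simp add: case_prod_unfold)
  also have "\<dots> = (\<Sum>(a, l)\<in>A \<times> ?L n. f 0 a * (\<Prod>i<n. f (Suc i) (l ! i)))"
    by (rule sum.cong[OF refl]) (clarsimp simp del: prod.lessThan_Suc simp: prod.lessThan_Suc_shift)
  also have "\<dots> = (\<Sum>a\<in>A. f 0 a) * (\<Sum>l\<in>?L n. \<Prod>i<n. f (Suc i) (l ! i))"
    by (simp add: sum_product sum.cartesian_product)
  also have "\<dots> = (\<Sum>a\<in>A. f 0 a) * (\<Prod>i<n. \<Sum>a\<in>A. f (Suc i) a)"
    using Suc.IH[of "\<lambda>i. f (Suc i)"] Suc.prems by simp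
  also have "\<dots> = (\<Prod>i<Suc n. \<Sum>a\<in>A. f i a)"
    by (simp only: prod.lessThan_Suc_shift)
  finally show ?case .
qed

lemma conv_reindex:
  assumes "length xs = n" "finite A" "\<And>i a. i < n \<Longrightarrow> a \<notin> A \<Longrightarrow> (xs ! i) a = 0"
  shows "conv H xs t = (\<Sum>s\<in>{l. set l \<subseteq> A \<and> length l = n}.
            H (map (\<lambda>a. t - a) s) * (\<Prod>i<n. (xs ! i) (s ! i)))"
proof -
  let ?g = "map (\<lambda>a. t - a)"
  let ?f = "\<lambda>\<tau>. H \<tau> * (\<Prod>i<n. (xs ! i) (t - \<tau> ! i))"
  have bij: "bij_betw ?g (tuples n) (tuples n)"
    by (rule bij_betw_byWitness[where f' = ?g]) (auto simp: tuples_def comp_def)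
  have "conv H xs t = infsum ?f (tuples n)"
    unfolding conv_def using assms(1) by simp
  also have "\<dots> = infsum (\<lambda>s. ?f (?g s)) (tuples n)"
    by (rule infsum_reindex_bij_betw[symmetric, OF bij])
  also have "\<dots> = infsum (\<lambda>s. H (?g s) * (\<Prod>i<n. (xs ! i) (s ! i))) (tuples n)"
    by (rule infsum_cong) (auto simp: tuples_def intro!: prod.cong)
  also have "\<dots> = infsum (\<lambda>s. H (?g s) * (\<Prod>i<n. (xs ! i) (s ! i))) {l. set l \<subseteq> A \<and> length l = n}"
  proof (rule infsum_cong_neutral)
    fix s assume s: "s \<in> tuples n - {l. set l \<subseteq> A \<and> length l = n}"
    then have "\<not> set s \<subseteq> A" "length s = n" by (auto simp: tuples_def)
    then obtain a where "a \<in> set s" "a \<notin> A" by auto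
    then obtain i where "i < n" "s ! i \<notin> A" using \<open>length s = n\<close> by (auto simp: in_set_conv_nth)
    then show "H (?g s) * (\<Prod>i<n. (xs ! i) (s ! i)) = 0"
      using assms(3) by (auto intro!: prod_zero)
  qed (auto simp: tuples_def)
  finally show ?thesis using finite_lists_length_eq[OF assms(2)] by simp
qed


lemma bound1:
  assumes SH: "finite SH" "SH \<subseteq> tuples n" "\<And>\<tau>. \<tau> \<in> tuples n \<Longrightarrow> \<tau> \<notin> SH \<Longrightarrow> H \<tau> = 0"
    and len: "length xs = n" and n: "n \<ge> 1"
    and fx: "\<And>i. i < n \<Longrightarrow> finite (supp (xs ! i))"
  shows "sig_norm 2 (conv H xs) \<le> ker_norm 2 n H * (\<Prod>i<n. sig_norm 1 (xs ! i))"
proof -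
  define A where "A = (\<Union>i<n. supp (xs ! i))"
  define L where "L = {l. set l \<subseteq> A \<and> length l = n}"
  define K where "K s t = H (map (\<lambda>a. t - a) s)" for s t
  define c where "c s = (\<Prod>i<n. (xs ! i) (s ! i))" for s
  have fA: "finite A" unfolding A_def using fx by auto
  have fL: "finite L" unfolding L_def using finite_lists_length_eq[OF fA] .
  have cv: "conv H xs = (\<lambda>t. \<Sum>s\<in>L. c s * K s t)"
  proof
    fix t
    show "conv H xs t = (\<Sum>s\<in>L. c s * K s t)"
      unfolding L_def K_def c_def
      by (subst conv_reindex[OF len fA]) (auto simp: A_def supp_def mult.commute)
  qed
  have ker2: "ker_norm 2 n H = sqrt (\<Sum>\<tau>\<in>SH. (H \<tau>)^2)"
    by (rule lp2_fin) (use SH in auto)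
  have Ks: "finite (supp (K s)) \<and> sig_norm 2 (K s) \<le> ker_norm 2 n H" if s: "s \<in> L" for s
  proof -
    let ?g = "\<lambda>t. map (\<lambda>a. t - a) s"
    have sne: "s \<noteq> []" using s n by (auto simp: L_def)
    have inj: "inj ?g"
    proof (rule injI)
      fix t t' assume "?g t = ?g t'"
      then show "t = t'" using sne by (cases s) auto
    qed
    let ?T = "?g -` SH"
    have fT: "finite ?T" using SH(1) inj by (auto intro: finite_vimageI)
    have sub: "supp (K s) \<subseteq> ?T"
    proof
      fix t assume "t \<in> supp (K s)"
      then have "H (?g t) \<noteq> 0" by (simp add: supp_def K_def)
      moreover have "?g t \<in> tuples n" using s by (simp add: tuples_def L_def)
      ultimately show "t \<in> ?T" using SH(3) by blast
    qed
    have "sig_norm 2 (K s) = sqrt (\<Sum>t\<in>?T. (K s t)^2)" by (rule sig2_fin[OF fT sub])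
    also have "(\<Sum>t\<in>?T. (K s t)^2) = (\<Sum>t\<in>?T. (\<lambda>\<tau>. if \<tau> \<in> SH then (H \<tau>)^2 else 0) (?g t))"
      by (rule sum.cong) (auto simp: K_def)
    also have "\<dots> \<le> (\<Sum>\<tau>\<in>SH. (\<lambda>\<tau>. if \<tau> \<in> SH then (H \<tau>)^2 else 0) \<tau>)"
      by (rule sum_inj_le) (use inj SH fT in \<open>auto simp: inj_on_def\<close>)
    also have "\<dots> = (\<Sum>\<tau>\<in>SH. (H \<tau>)^2)" by simp
    finally have "sig_norm 2 (K s) \<le> ker_norm 2 n H" unfolding ker2 by (simp add: real_sqrt_le_mono)
    with fT sub show ?thesis by (auto intro: finite_subset)
  qed
  have "sig_norm 2 (conv H xs) \<le> (\<Sum>s\<in>L. sig_norm 2 (\<lambda>t. c s * K s t))"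
    unfolding cv by (rule sig2_sum[OF fL]) (use Ks in \<open>auto intro: supp_mult\<close>)
  also have "\<dots> = (\<Sum>s\<in>L. \<bar>c s\<bar> * sig_norm 2 (K s))"
    by (rule sum.cong) (use Ks sig2_scale in auto)
  also have "\<dots> \<le> (\<Sum>s\<in>L. \<bar>c s\<bar> * ker_norm 2 n H)"
    by (rule sum_mono) (use Ks in \<open>auto intro: mult_left_mono\<close>)
  also have "\<dots> = ker_norm 2 n H * (\<Sum>s\<in>L. \<Prod>i<n. \<bar>(xs ! i) (s ! i)\<bar>)"
    by (simp add: c_def abs_prod sum_distrib_left mult.commute)
  also have "(\<Sum>s\<in>L. \<Prod>i<n. \<bar>(xs ! i) (s ! i)\<bar>) = (\<Prod>i<n. \<Sum>a\<in>A. \<bar>(xs ! i) a\<bar>)"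
    unfolding L_def by (rule lists_sum_prod[OF fA])
  also have "\<dots> = (\<Prod>i<n. sig_norm 1 (xs ! i))"
    by (rule prod.cong[OF refl], rule lp1_fin[symmetric]) (use fA in \<open>auto simp: A_def supp_def\<close>)
  finally show ?thesis .
qed


lemma pow_powr_inv: "z \<ge> 0 \<Longrightarrow> m > 0 \<Longrightarrow> ((z::real) ^ m) powr (1 / real m) = z"
proof (cases "z = 0")
  case False
  assume "z \<ge> 0" "m > 0"
  then have "z > 0" using False by simp
  then have "z ^ m = z powr real m" by (simp add: powr_realpow)
  then show ?thesis using \<open>z > 0\<close> \<open>m > 0\<close> by (simp add: powr_powr)
qed simp

lemma amgm_sq:
  fixes a :: "'i \<Rightarrow> real"
  assumes "finite I" "I \<noteq> {}"
  shows "(\<Prod>i\<in>I. a i)^2 \<le> (\<Sum>i\<in>I. (a i)^(2 * card I) / card I)"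
proof -
  let ?m = "card I"
  have m: "?m > 0" using assms by (simp add: card_gt_0_iff)
  have "(\<Prod>i\<in>I. (a i)^(2 * ?m)) powr (1 / ?m) \<le> (\<Sum>i\<in>I. (a i)^(2 * ?m) / ?m)"
    by (rule arith_geom_mean) (use assms in \<open>auto simp: power_mult\<close>)
  moreover have "(\<Prod>i\<in>I. (a i)^(2 * ?m)) = ((\<Prod>i\<in>I. a i)^2)^?m"
    by (simp add: power_mult prod_power_distrib)
  moreover have "(((\<Prod>i\<in>I. a i)^2)^?m) powr (1 / ?m) = (\<Prod>i\<in>I. a i)^2"
    by (rule pow_powr_inv) (use m in auto)
  ultimately show ?thesis by simp
qed

lemma prodshift:
  fixes y :: signal and c :: "'i \<Rightarrow> int"
  assumes I: "finite I" "I \<noteq> {}" and fy: "finite (supp y)"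
  shows "finite (supp (\<lambda>t. \<Prod>i\<in>I. y (t - c i)))
     \<and> sig_norm 2 (\<lambda>t. \<Prod>i\<in>I. y (t - c i)) \<le> sig_norm (2 * real (card I)) y ^ card I"
proof -
  let ?m = "card I"
  let ?P = "\<lambda>t. \<Prod>i\<in>I. y (t - c i)"
  let ?U = "supp y"
  define T where "T = (\<Union>i\<in>I. (\<lambda>t. t - c i) -` ?U)"
  have m: "?m > 0" using I by (simp add: card_gt_0_iff)
  have injc: "inj (\<lambda>t::int. t - d)" for d by (auto simp: inj_on_def)
  have fT: "finite T" unfolding T_def using I fy injc by (auto intro: finite_vimageI)
  have sub: "supp ?P \<subseteq> T"
  proof
    fix t assume "t \<in> supp ?P"
    then have "?P t \<noteq> 0" by (simp add: supp_def)
    moreover obtain i where "i \<in> I" using I by auto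
    ultimately have "y (t - c i) \<noteq> 0" using I by auto
    then show "t \<in> T" unfolding T_def using \<open>i \<in> I\<close> by (auto simp: supp_def)
  qed
  define Q where "Q = (\<Sum>u\<in>?U. (y u)^(2 * ?m))"
  have F0: "(z::real)^(2 * ?m) \<ge> 0" for z by (simp add: power_mult)
  have Q0: "Q \<ge> 0" unfolding Q_def using F0 by (simp add: sum_nonneg)
  have "(\<Sum>t\<in>T. (?P t)^2) \<le> (\<Sum>t\<in>T. \<Sum>i\<in>I. (y (t - c i))^(2 * ?m) / ?m)"
    by (rule sum_mono, rule amgm_sq[OF I])
  also have "\<dots> = (\<Sum>i\<in>I. (\<Sum>t\<in>T. (y (t - c i))^(2 * ?m)) / ?m)"
    by (subst sum.swap) (simp add: sum_divide_distrib)
  also have "\<dots> \<le> (\<Sum>i\<in>I. Q / ?m)"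
  proof (rule sum_mono)
    fix i assume "i \<in> I"
    have "(\<Sum>t\<in>T. (\<lambda>u. (y u)^(2 * ?m)) (t - c i)) \<le> (\<Sum>u\<in>?U. (\<lambda>u. (y u)^(2 * ?m)) u)"
      by (rule sum_inj_le) (use injc fT fy F0 m in \<open>auto simp: supp_def inj_on_def\<close>)
    then show "(\<Sum>t\<in>T. (y (t - c i))^(2 * ?m)) / ?m \<le> Q / ?m"
      unfolding Q_def by (simp add: divide_right_mono)
  qed
  also have "\<dots> = Q" using m by simp
  finally have le: "sig_norm 2 ?P \<le> sqrt Q"
    using sig2_fin[OF fT sub] by (simp add: real_sqrt_le_mono)
  have "sig_norm (2 * real ?m) y = (\<Sum>u\<in>?U. \<bar>y u\<bar> powr (2 * real ?m)) powr (1 / (2 * real ?m))"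
    by (rule lp_fin) (use fy in \<open>auto simp: supp_def\<close>)
  also have "(\<Sum>u\<in>?U. \<bar>y u\<bar> powr (2 * real ?m)) = Q"
  proof -
    have "\<bar>y u\<bar> powr (2 * real ?m) = (y u)^(2 * ?m)" for u
      using abs_powr_nat[of "2 * ?m" "y u"] m by (simp add: power_even_abs)
    then show ?thesis unfolding Q_def by simp
  qed
  finally have sg: "sig_norm (2 * real ?m) y = Q powr (1 / (2 * real ?m))" .
  have "(Q powr (1 / (2 * real ?m))) ^ ?m = sqrt Q"
  proof (cases "Q = 0")
    case True then show ?thesis using m by simp
  next
    case False
    then show ?thesis using Q0 m by (simp add: powr_power powr_half_sqrt[symmetric])
  qed
  with le sg have "sig_norm 2 ?P \<le> sig_norm (2 * real ?m) y ^ ?m" by simp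
  with fT sub show ?thesis by (auto intro: finite_subset)
qed


definition xsS :: "nat \<Rightarrow> signal \<Rightarrow> signal \<Rightarrow> nat set \<Rightarrow> signal list" where
  "xsS n x e S = map (\<lambda>i. if i \<in> S then e else x) [0..<n]"

lemma bound2:
  assumes SH: "finite SH" "SH \<subseteq> tuples n" "\<And>\<tau>. \<tau> \<in> tuples n \<Longrightarrow> \<tau> \<notin> SH \<Longrightarrow> H \<tau> = 0"
    and S: "S \<subseteq> {..<n}" "S \<noteq> {}"
    and fx: "finite (supp x)" and fe: "finite (supp e)"
  shows "sig_norm 2 (conv H (xsS n x e S)) \<le> ker_norm 1 n H *
     (sig_norm (2 * real (n - card S)) x ^ (n - card S) * sig_norm (2 * real (card S)) e ^ (card S))"
proof -
  define B where "B = sig_norm (2 * real (n - card S)) x ^ (n - card S) * sig_norm (2 * real (card S)) e ^ (card S)"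
  define Px where "Px \<tau> t = (\<Prod>i\<in>{..<n}-S. x (t - \<tau> ! i))" for \<tau> t
  define Pe where "Pe \<tau> t = (\<Prod>i\<in>S. e (t - \<tau> ! i))" for \<tau> t
  have fS: "finite S" using S finite_subset by blast
  have cS: "card ({..<n} - S) = n - card S" using S fS by (simp add: card_Diff_subset)
  have cv: "conv H (xsS n x e S) = (\<lambda>t. \<Sum>\<tau>\<in>SH. H \<tau> * (Px \<tau> t * Pe \<tau> t))"
  proof
    fix t
    have "conv H (xsS n x e S) t = (\<Sum>\<tau>\<in>SH. H \<tau> * (\<Prod>i<n. (xsS n x e S ! i) (t - \<tau> ! i)))"
      by (rule conv_fin) (use SH in \<open>auto simp: xsS_def\<close>)
    also have "\<dots> = (\<Sum>\<tau>\<in>SH. H \<tau> * (Px \<tau> t * Pe \<tau> t))"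
    proof (rule sum.cong[OF refl])
      fix \<tau>
      have "(\<Prod>i<n. (xsS n x e S ! i) (t - \<tau> ! i)) = (\<Prod>i<n. if i \<in> S then e (t - \<tau> ! i) else x (t - \<tau> ! i))"
        by (rule prod.cong) (auto simp: xsS_def)
      also have "\<dots> = Pe \<tau> t * Px \<tau> t"
        by (subst prod.If_cases) (use S in \<open>auto simp: Px_def Pe_def Int_absorb1 Diff_eq\<close>)
      finally show "H \<tau> * (\<Prod>i<n. (xsS n x e S ! i) (t - \<tau> ! i)) = H \<tau> * (Px \<tau> t * Pe \<tau> t)"
        by simp
    qed
    finally show "conv H (xsS n x e S) t = (\<Sum>\<tau>\<in>SH. H \<tau> * (Px \<tau> t * Pe \<tau> t))" .
  qed
  have bnd: "finite (supp (\<lambda>t. Px \<tau> t * Pe \<tau> t)) \<and> sig_norm 2 (\<lambda>t. Px \<tau> t * Pe \<tau> t) \<le> B" for \<tau>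
  proof -
    have e1: "finite (supp (Pe \<tau>)) \<and> sig_norm 2 (Pe \<tau>) \<le> sig_norm (2 * real (card S)) e ^ card S"
      unfolding Pe_def using prodshift[OF fS S(2) fe, of "\<lambda>i. \<tau> ! i"] by simp
    show ?thesis
    proof (cases "{..<n} - S = {}")
      case True
      then have "S = {..<n}" using S by auto
      then have "card S = n" by simp
      then have "B = sig_norm (2 * real (card S)) e ^ card S" unfolding B_def by simp
      moreover have "(\<lambda>t. Px \<tau> t * Pe \<tau> t) = Pe \<tau>" unfolding Px_def True by simp
      ultimately show ?thesis using e1 by simp
    next
      case False
      have x1: "finite (supp (Px \<tau>)) \<and> sig_norm 2 (Px \<tau>) \<le> sig_norm (2 * real (n - card S)) x ^ (n - card S)"
        unfolding Px_def using prodshift[OF _ False fx, of "\<lambda>i. \<tau> ! i"] cS by simp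
      have "sig_norm 2 (\<lambda>t. Px \<tau> t * Pe \<tau> t) \<le> sig_norm 2 (Px \<tau>) * sig_norm 2 (Pe \<tau>)"
        by (rule sig2_mult) (use x1 e1 in auto)
      also have "\<dots> \<le> B" unfolding B_def
        by (rule mult_mono) (use x1 e1 lp_nonneg in \<open>auto intro: zero_le_power\<close>)
      finally show ?thesis using e1 supp_mult by blast
    qed
  qed
  have "sig_norm 2 (conv H (xsS n x e S)) \<le> (\<Sum>\<tau>\<in>SH. sig_norm 2 (\<lambda>t. H \<tau> * (Px \<tau> t * Pe \<tau> t)))"
    unfolding cv by (rule sig2_sum[OF SH(1)]) (use bnd in \<open>auto intro: supp_mult\<close>)
  also have "\<dots> = (\<Sum>\<tau>\<in>SH. \<bar>H \<tau>\<bar> * sig_norm 2 (\<lambda>t. Px \<tau> t * Pe \<tau> t))"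
    by (rule sum.cong) (use bnd sig2_scale in auto)
  also have "\<dots> \<le> (\<Sum>\<tau>\<in>SH. \<bar>H \<tau>\<bar> * B)"
    by (rule sum_mono) (use bnd in \<open>auto intro: mult_left_mono\<close>)
  also have "\<dots> = ker_norm 1 n H * B"
    using lp1_fin[OF SH(1) SH(2), of H] SH(3) by (simp add: sum_distrib_right)
  finally show ?thesis unfolding B_def .
qed


lemma conv_xsS:
  assumes SH: "finite SH" "SH \<subseteq> tuples n" "\<And>\<tau>. \<tau> \<in> tuples n \<Longrightarrow> \<tau> \<notin> SH \<Longrightarrow> H \<tau> = 0"
    and X: "X \<subseteq> {..<n}"
  shows "conv H (xsS n x e X) t = (\<Sum>\<tau>\<in>SH. H \<tau> * ((\<Prod>i\<in>X. e (t - \<tau> ! i)) * (\<Prod>i\<in>{..<n}-X. x (t - \<tau> ! i))))"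
proof -
  have "conv H (xsS n x e X) t = (\<Sum>\<tau>\<in>SH. H \<tau> * (\<Prod>i<n. (xsS n x e X ! i) (t - \<tau> ! i)))"
    by (rule conv_fin) (use SH in \<open>auto simp: xsS_def\<close>)
  also have "\<dots> = (\<Sum>\<tau>\<in>SH. H \<tau> * ((\<Prod>i\<in>X. e (t - \<tau> ! i)) * (\<Prod>i\<in>{..<n}-X. x (t - \<tau> ! i))))"
  proof (rule sum.cong[OF refl])
    fix \<tau>
    have "(\<Prod>i<n. (xsS n x e X ! i) (t - \<tau> ! i)) = (\<Prod>i<n. if i \<in> X then e (t - \<tau> ! i) else x (t - \<tau> ! i))"
      by (rule prod.cong) (auto simp: xsS_def)
    also have "\<dots> = (\<Prod>i\<in>X. e (t - \<tau> ! i)) * (\<Prod>i\<in>{..<n}-X. x (t - \<tau> ! i))"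
      by (subst prod.If_cases) (use X in \<open>auto simp: Int_absorb1 Diff_eq\<close>)
    finally show "H \<tau> * (\<Prod>i<n. (xsS n x e X ! i) (t - \<tau> ! i)) = H \<tau> * ((\<Prod>i\<in>X. e (t - \<tau> ! i)) * (\<Prod>i\<in>{..<n}-X. x (t - \<tau> ! i)))"
      by simp
  qed
  finally show ?thesis .
qed

lemma expand:
  assumes SH: "finite SH" "SH \<subseteq> tuples n" "\<And>\<tau>. \<tau> \<in> tuples n \<Longrightarrow> \<tau> \<notin> SH \<Longrightarrow> H \<tau> = 0"
  shows "conv_pow H n (\<lambda>s. x s + e s) t - conv_pow H n x t = (\<Sum>S\<in>Pow {..<n} - {{}}. conv H (xsS n x e S) t)"
proof -
  have "conv_pow H n (\<lambda>s. x s + e s) t = (\<Sum>\<tau>\<in>SH. H \<tau> * (\<Prod>i<n. x (t - \<tau> ! i) + e (t - \<tau> ! i)))"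
    unfolding conv_pow_def by (subst conv_fin[OF SH]) auto
  also have "\<dots> = (\<Sum>\<tau>\<in>SH. H \<tau> * (\<Sum>X\<in>Pow {..<n}. (\<Prod>i\<in>X. e (t - \<tau> ! i)) * (\<Prod>i\<in>{..<n}-X. x (t - \<tau> ! i))))"
    by (rule sum.cong[OF refl]) (subst add.commute, subst prod_add, auto)
  also have "\<dots> = (\<Sum>X\<in>Pow {..<n}. \<Sum>\<tau>\<in>SH. H \<tau> * ((\<Prod>i\<in>X. e (t - \<tau> ! i)) * (\<Prod>i\<in>{..<n}-X. x (t - \<tau> ! i))))"
    by (simp add: sum_distrib_left sum.swap[of _ SH])
  also have "\<dots> = (\<Sum>X\<in>Pow {..<n}. conv H (xsS n x e X) t)"
    by (rule sum.cong[OF refl], rule conv_xsS[OF SH, symmetric]) auto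
  also have "\<dots> = conv H (xsS n x e {}) t + (\<Sum>S\<in>Pow {..<n} - {{}}. conv H (xsS n x e S) t)"
    by (subst sum.remove[of _ "{}"]) auto
  also have "xsS n x e {} = replicate n x" by (simp add: xsS_def map_replicate_const)
  finally show ?thesis unfolding conv_pow_def by simp
qed

lemma count_subsets:
  fixes g :: "nat \<Rightarrow> real"
  shows "(\<Sum>S\<in>Pow {..<n} - {{}}. g (card S)) = (\<Sum>k<n. real (n choose k) * g (n - k))"
proof -
  let ?P = "Pow {..<n} - {{}}"
  have fP: "finite ?P" by simp
  have img: "card ` ?P \<subseteq> {1..n}"
  proof
    fix j assume "j \<in> card ` ?P"
    then obtain S where S: "S \<subseteq> {..<n}" "S \<noteq> {}" "j = card S" by auto
    then have "finite S" using finite_subset by blast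
    then have "j \<ge> 1" using S by (simp add: Suc_le_eq card_gt_0_iff)
    moreover have "j \<le> n" using S card_mono[of "{..<n}" S] by simp
    ultimately show "j \<in> {1..n}" by simp
  qed
  have "(\<Sum>S\<in>?P. g (card S)) = (\<Sum>j\<in>{1..n}. \<Sum>S\<in>{S \<in> ?P. card S = j}. g (card S))"
    by (rule sum.group[symmetric, OF fP _ img]) simp
  also have "\<dots> = (\<Sum>j\<in>{1..n}. real (n choose j) * g j)"
  proof (rule sum.cong[OF refl])
    fix j assume j: "j \<in> {1..n}"
    have eq: "{S \<in> ?P. card S = j} = {S. S \<subseteq> {..<n} \<and> card S = j}" using j by auto
    have "(\<Sum>S\<in>{S \<in> ?P. card S = j}. g (card S)) = (\<Sum>S\<in>{S \<in> ?P. card S = j}. g j)"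
      by (rule sum.cong) auto
    also have "\<dots> = real (card {S. S \<subseteq> {..<n} \<and> card S = j}) * g j" unfolding eq by simp
    also have "card {S. S \<subseteq> {..<n} \<and> card S = j} = n choose j" using n_subsets[of "{..<n}" j] by simp
    finally show "(\<Sum>S\<in>{S \<in> ?P. card S = j}. g (card S)) = real (n choose j) * g j" .
  qed
  also have "\<dots> = (\<Sum>k<n. real (n choose (n - k)) * g (n - k))"
    by (rule sum.reindex_bij_witness[of _ "\<lambda>k. n - k" "\<lambda>j. n - j"]) auto
  also have "\<dots> = (\<Sum>k<n. real (n choose k) * g (n - k))"
    by (rule sum.cong[OF refl]) (simp add: binomial_symmetric[symmetric])
  finally show ?thesis .
qed

lemma pow_fact_le_exp: "(x::real) \<ge> 0 \<Longrightarrow> x ^ k / fact k \<le> exp x"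
proof -
  assume x: "x \<ge> 0"
  have su: "(\<lambda>j. x ^ j / fact j) sums exp x" using exp_converges[of x] by (simp add: divide_inverse_commute scaleR_conv_of_real)
  have "(\<Sum>j\<in>{k}. x ^ j / fact j) \<le> suminf (\<lambda>j. x ^ j / fact j)"
    by (rule sum_le_suminf) (use su x in \<open>auto simp: sums_iff\<close>)
  then show ?thesis using su by (simp add: sums_iff)
qed

lemma binom_bound: "real (n choose k) \<le> (exp 1 * real n / real k) ^ k"
proof (cases "k = 0")
  case True then show ?thesis by simp
next
  case False
  then have k: "real k > 0" by simp
  have f: "real (n choose k) * fact k \<le> real n ^ k"
    using binomial_fact_pow[of n k] by (metis of_nat_fact of_nat_le_iff of_nat_mult of_nat_power)
  have "real k ^ k / fact k \<le> exp (real k)" by (rule pow_fact_le_exp) simp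
  also have "exp (real k) = exp 1 ^ k" using exp_of_nat_mult[of k 1] by simp
  finally have g: "real k ^ k \<le> exp 1 ^ k * fact k" by (simp add: divide_le_eq)
  have "real (n choose k) * real k ^ k \<le> real (n choose k) * (exp 1 ^ k * fact k)"
    by (rule mult_left_mono[OF g]) simp
  also have "\<dots> = exp 1 ^ k * (real (n choose k) * fact k)" by simp
  also have "\<dots> \<le> exp 1 ^ k * real n ^ k" by (rule mult_left_mono[OF f]) simp
  finally have "real (n choose k) * real k ^ k \<le> exp 1 ^ k * real n ^ k" .
  then show ?thesis using k by (simp add: power_divide power_mult_distrib pos_le_divide_eq)
qed


lemma conv_supp:
  assumes SH: "finite SH" "SH \<subseteq> tuples n" "\<And>\<tau>. \<tau> \<in> tuples n \<Longrightarrow> \<tau> \<notin> SH \<Longrightarrow> H \<tau> = 0"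
    and len: "length xs = n" and n: "n \<ge> 1" and f0: "finite (supp (xs ! 0))"
  shows "finite (supp (conv H xs))"
proof -
  have "conv H xs = (\<lambda>t. \<Sum>\<tau>\<in>SH. H \<tau> * (\<Prod>i<n. (xs ! i) (t - \<tau> ! i)))"
    using conv_fin[OF SH len] by auto
  moreover have "finite (supp (\<lambda>t. \<Sum>\<tau>\<in>SH. H \<tau> * (\<Prod>i<n. (xs ! i) (t - \<tau> ! i))))"
    by (rule supp_sumI[OF SH(1)], rule supp_mult, rule supp_prod[of _ 0])
       (use n f0 supp_shift in auto)
  ultimately show ?thesis by simp
qed

lemma sig2_zero: "sig_norm 2 (\<lambda>t. 0) = 0"
  by (subst sig2_fin[of "{}"]) (auto simp: supp_def)

lemma per_n:
  fixes H :: kernel and x e :: signal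
  assumes SH: "finite {\<tau>\<in>tuples n. H \<tau> \<noteq> 0}"
    and fx: "finite (supp x)" and fe: "finite (supp e)"
  defines "D \<equiv> (\<lambda>t. conv_pow H n (\<lambda>s. x s + e s) t - conv_pow H n x t)"
  shows "finite (supp D)"
    and "sig_norm 2 D \<le> ker_norm 2 n H *
         (\<Sum>k<n. (exp 1 * real n / real k) ^ k * sig_norm 1 x ^ k * sig_norm 1 e ^ (n - k))"
    and "sig_norm 2 D \<le> ker_norm 1 n H *
         (\<Sum>k<n. (exp 1 * real n / real k) ^ k * sig_norm (2 * real k) x ^ k
                  * sig_norm (2 * real (n - k)) e ^ (n - k))"
proof -
  let ?SH = "{\<tau>\<in>tuples n. H \<tau> \<noteq> 0}"
  have SH3: "?SH \<subseteq> tuples n" "\<And>\<tau>. \<tau> \<in> tuples n \<Longrightarrow> \<tau> \<notin> ?SH \<Longrightarrow> H \<tau> = 0" by auto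
  let ?P = "Pow {..<n} - {{}}"
  have Deq: "D = (\<lambda>t. \<Sum>S\<in>?P. conv H (xsS n x e S) t)"
    unfolding D_def using expand[OF SH SH3] by auto
  have fS: "finite (supp (conv H (xsS n x e S)))" if "S \<in> ?P" for S
  proof -
    from that obtain i where i: "i \<in> S" "i < n" by auto
    then have n1: "n \<ge> 1" by simp
    show ?thesis
      by (rule conv_supp[OF SH SH3 _ n1]) (use n1 fx fe in \<open>auto simp: xsS_def\<close>)
  qed
  show "finite (supp D)" unfolding Deq by (rule supp_sumI) (use fS in auto)
  have sD: "sig_norm 2 D \<le> (\<Sum>S\<in>?P. sig_norm 2 (conv H (xsS n x e S)))"
    unfolding Deq by (rule sig2_sum) (use fS in auto)
  have nn: "0 \<le> ker_norm p n H" for p by (rule lp_nonneg)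
  have "(\<Sum>S\<in>?P. sig_norm 2 (conv H (xsS n x e S)))
      \<le> (\<Sum>S\<in>?P. ker_norm 2 n H * (sig_norm 1 x ^ (n - card S) * sig_norm 1 e ^ card S))"
  proof (rule sum_mono)
    fix S assume S: "S \<in> ?P"
    then obtain i where i: "i \<in> S" "i < n" by auto
    then have n1: "n \<ge> 1" by simp
    have Ss: "S \<subseteq> {..<n}" using S by auto
    have fS': "finite S" using Ss finite_subset by blast
    have "sig_norm 2 (conv H (xsS n x e S)) \<le> ker_norm 2 n H * (\<Prod>i<n. sig_norm 1 (xsS n x e S ! i))"
      by (rule bound1[OF SH SH3 _ n1]) (use fx fe in \<open>auto simp: xsS_def\<close>)
    also have "(\<Prod>i<n. sig_norm 1 (xsS n x e S ! i)) = (\<Prod>i<n. if i \<in> S then sig_norm 1 e else sig_norm 1 x)"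
      by (rule prod.cong) (auto simp: xsS_def)
    also have "\<dots> = sig_norm 1 x ^ (n - card S) * sig_norm 1 e ^ card S"
      by (subst prod.If_cases) (use Ss fS' in \<open>auto simp: Int_absorb1 card_Diff_subset Diff_eq[symmetric]\<close>)
    finally show "sig_norm 2 (conv H (xsS n x e S)) \<le> ker_norm 2 n H * (sig_norm 1 x ^ (n - card S) * sig_norm 1 e ^ card S)" .
  qed
  also have "\<dots> = ker_norm 2 n H * (\<Sum>k<n. real (n choose k) * (sig_norm 1 x ^ (n - (n - k)) * sig_norm 1 e ^ (n - k)))"
    by (subst sum_distrib_left[symmetric], rule arg_cong[where f = "\<lambda>u. ker_norm 2 n H * u"],
        rule count_subsets[of "\<lambda>j. sig_norm 1 x ^ (n - j) * sig_norm 1 e ^ j" n])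
  also have "\<dots> \<le> ker_norm 2 n H * (\<Sum>k<n. (exp 1 * real n / real k) ^ k * sig_norm 1 x ^ k * sig_norm 1 e ^ (n - k))"
  proof (rule mult_left_mono[OF sum_mono nn])
    fix k assume "k \<in> {..<n}"
    then have "n - (n - k) = k" by simp
    then show "real (n choose k) * (sig_norm 1 x ^ (n - (n - k)) * sig_norm 1 e ^ (n - k))
        \<le> (exp 1 * real n / real k) ^ k * sig_norm 1 x ^ k * sig_norm 1 e ^ (n - k)"
      using mult_right_mono[OF binom_bound[of n k] mult_nonneg_nonneg[OF zero_le_power[OF lp_nonneg] zero_le_power[OF lp_nonneg]]]
      by (simp add: mult.assoc)
  qed
  finally show "sig_norm 2 D \<le> ker_norm 2 n H *
         (\<Sum>k<n. (exp 1 * real n / real k) ^ k * sig_norm 1 x ^ k * sig_norm 1 e ^ (n - k))"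
    using sD by linarith
  have "(\<Sum>S\<in>?P. sig_norm 2 (conv H (xsS n x e S)))
      \<le> (\<Sum>S\<in>?P. ker_norm 1 n H * (sig_norm (2 * real (n - card S)) x ^ (n - card S) * sig_norm (2 * real (card S)) e ^ (card S)))"
  proof (rule sum_mono)
    fix S assume S: "S \<in> ?P"
    then have Ss: "S \<subseteq> {..<n}" "S \<noteq> {}" by auto
    show "sig_norm 2 (conv H (xsS n x e S)) \<le> ker_norm 1 n H * (sig_norm (2 * real (n - card S)) x ^ (n - card S) * sig_norm (2 * real (card S)) e ^ (card S))"
      by (rule bound2[OF SH SH3 Ss fx fe])
  qed
  also have "\<dots> = ker_norm 1 n H * (\<Sum>k<n. real (n choose k) * (sig_norm (2 * real (n - (n - k))) x ^ (n - (n - k)) * sig_norm (2 * real (n - k)) e ^ (n - k)))"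
    by (subst sum_distrib_left[symmetric], rule arg_cong[where f = "\<lambda>u. ker_norm 1 n H * u"],
        rule count_subsets[of "\<lambda>j. sig_norm (2 * real (n - j)) x ^ (n - j) * sig_norm (2 * real j) e ^ j" n])
  also have "\<dots> \<le> ker_norm 1 n H * (\<Sum>k<n. (exp 1 * real n / real k) ^ k * sig_norm (2 * real k) x ^ k
                  * sig_norm (2 * real (n - k)) e ^ (n - k))"
  proof (rule mult_left_mono[OF sum_mono nn])
    fix k assume "k \<in> {..<n}"
    then have "n - (n - k) = k" by simp
    then show "real (n choose k) * (sig_norm (2 * real (n - (n - k))) x ^ (n - (n - k)) * sig_norm (2 * real (n - k)) e ^ (n - k))
        \<le> (exp 1 * real n / real k) ^ k * sig_norm (2 * real k) x ^ k * sig_norm (2 * real (n - k)) e ^ (n - k)"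
      using mult_right_mono[OF binom_bound[of n k] mult_nonneg_nonneg[OF zero_le_power[OF lp_nonneg] zero_le_power[OF lp_nonneg]]]
      by (simp add: mult.assoc)
  qed
  finally show "sig_norm 2 D \<le> ker_norm 1 n H *
         (\<Sum>k<n. (exp 1 * real n / real k) ^ k * sig_norm (2 * real k) x ^ k
                  * sig_norm (2 * real (n - k)) e ^ (n - k))"
    using sD by linarith
qed


theorem theorem19:
  fixes N :: nat and H :: "nat \<Rightarrow> kernel" and x \<epsilon> :: signal
  assumes H_fin: "\<And>n. 1 \<le> n \<Longrightarrow> n \<le> N \<Longrightarrow> finite {\<tau>\<in>tuples n. H n \<tau> \<noteq> 0}"
    and x_fin: "finite {t. x t \<noteq> 0}"
    and eps_fin: "finite {t. \<epsilon> t \<noteq> 0}"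
  shows "sig_norm 2 (\<lambda>t. volterra N H (\<lambda>s. x s + \<epsilon> s) t - volterra N H x t)
    \<le> min
      (\<Sum>n\<le>N. ker_norm 2 n (H n) *
         (\<Sum>k<n. (exp 1 * real n / real k) ^ k * sig_norm 1 x ^ k * sig_norm 1 \<epsilon> ^ (n - k)))
      (\<Sum>n\<le>N. ker_norm 1 n (H n) *
         (\<Sum>k<n. (exp 1 * real n / real k) ^ k * sig_norm (2 * real k) x ^ k
                  * sig_norm (2 * real (n - k)) \<epsilon> ^ (n - k)))"
proof -
  define Dn where "Dn n t = conv_pow (H n) n (\<lambda>s. x s + \<epsilon> s) t - conv_pow (H n) n x t" for n t
  have fx: "finite (supp x)" using x_fin by (simp add: supp_def)
  have fe: "finite (supp \<epsilon>)" using eps_fin by (simp add: supp_def)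
  have Deq: "(\<lambda>t. volterra N H (\<lambda>s. x s + \<epsilon> s) t - volterra N H x t) = (\<lambda>t. \<Sum>n\<le>N. Dn n t)"
    by (auto simp: volterra_def Dn_def sum_subtractf)
  have each: "finite (supp (Dn n)) \<and>
      sig_norm 2 (Dn n) \<le> ker_norm 2 n (H n) *
         (\<Sum>k<n. (exp 1 * real n / real k) ^ k * sig_norm 1 x ^ k * sig_norm 1 \<epsilon> ^ (n - k)) \<and>
      sig_norm 2 (Dn n) \<le> ker_norm 1 n (H n) *
         (\<Sum>k<n. (exp 1 * real n / real k) ^ k * sig_norm (2 * real k) x ^ k
                  * sig_norm (2 * real (n - k)) \<epsilon> ^ (n - k))" if n: "n \<le> N" for n
  proof (cases "n = 0")
    case True
    then have "Dn n = (\<lambda>t. 0)" by (auto simp: Dn_def conv_pow_def)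
    then show ?thesis using True sig2_zero by (simp add: supp_def)
  next
    case False
    then have SH: "finite {\<tau>\<in>tuples n. H n \<tau> \<noteq> 0}" using H_fin n by simp
    have e: "Dn n = (\<lambda>t. conv_pow (H n) n (\<lambda>s. x s + \<epsilon> s) t - conv_pow (H n) n x t)"
      by (simp add: Dn_def fun_eq_iff)
    show ?thesis unfolding e using per_n[OF SH fx fe] by blast
  qed
  have s: "sig_norm 2 (\<lambda>t. \<Sum>n\<le>N. Dn n t) \<le> (\<Sum>n\<le>N. sig_norm 2 (Dn n))"
    by (rule sig2_sum) (use each in auto)
  have a: "(\<Sum>n\<le>N. sig_norm 2 (Dn n)) \<le> (\<Sum>n\<le>N. ker_norm 2 n (H n) *
         (\<Sum>k<n. (exp 1 * real n / real k) ^ k * sig_norm 1 x ^ k * sig_norm 1 \<epsilon> ^ (n - k)))"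
    by (rule sum_mono) (use each in auto)
  have b: "(\<Sum>n\<le>N. sig_norm 2 (Dn n)) \<le> (\<Sum>n\<le>N. ker_norm 1 n (H n) *
         (\<Sum>k<n. (exp 1 * real n / real k) ^ k * sig_norm (2 * real k) x ^ k
                  * sig_norm (2 * real (n - k)) \<epsilon> ^ (n - k)))"
    by (rule sum_mono) (use each in auto)
  show ?thesis unfolding Deq using s a b by simp
qed

end
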